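(* Let $S\subset\mathbb{R}^2$ be a set of $n>4$ points in general position. Then there exists a Radon partition $P$ of $S$ whose degree in the Radon partition graph $G_T[S,2]$ is exactly $n-3$.
   Context: A Radon partition of a finite set $S\subset\mathbb{R}^d$ is a partition of $S$ into two nonempty disjoint parts $P_1,P_2$ (unordered) with $\operatorname{conv}(P_1)\cap\operatorname{conv}(P_2)\neq\emptyset$. For two partitions $P,P'$ of $S$, the partition distance $D(P,P')$ is the minimum number of elements of $S$ that must be removed so that $P$ and $P'$ restricted to the remaining elements coincide. The Radon partition graph $G_T[S,2]$ has as vertices all Radon partitions of $S$, with an edge between $P$ and $P'$ if and only if $D(P,P')=1$. *)

theory Defs
  imports "HOL-Analysis.Analysis"
begin

text \<open>Points of the plane are vectors of type real^2. A partition of S into two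
 parts is represented as the unordered set of its blocks.\<close>

definition general_position_2d :: "(real^2) set \<Rightarrow> bool" where
  "general_position_2d S \<longleftrightarrow> (\<forall>T \<subseteq> S. card T = 3 \<longrightarrow> \<not> collinear T)"

definition two_partitions :: "'a set \<Rightarrow> 'a set set set" where
  "two_partitions S = {{A, S - A} | A. A \<subseteq> S \<and> A \<noteq> {} \<and> S - A \<noteq> {}}"

definition radon_partitions :: "(real^2) set \<Rightarrow> (real^2) set set set" where
  "radon_partitions S = {P \<in> two_partitions S.
      \<exists>A B. P = {A, B} \<and> convex hull A \<inter> convex hull B \<noteq> {}}"

definition restrict_partition :: "'a set set \<Rightarrow> 'a set \<Rightarrow> 'a set set" where
  "restrict_partition P T = (\<lambda>B. B \<inter> T) ` P - {{}}"

definition partition_distance :: "'a set \<Rightarrow> 'a set set \<Rightarrow> 'a set set \<Rightarrow> nat" where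
  "partition_distance S P P' = (LEAST k. \<exists>R \<subseteq> S. card R = k \<and>
      restrict_partition P (S - R) = restrict_partition P' (S - R))"

definition radon_graph_degree :: "(real^2) set \<Rightarrow> (real^2) set set \<Rightarrow> nat" where
  "radon_graph_degree S P = card {P' \<in> radon_partitions S. partition_distance S P P' = 1}"

end

theory Submission
  imports Defs
begin


definition al :: "real \<Rightarrow> real^2 \<Rightarrow> real" where "al c p = p$1 + c * p$2"
definition slope :: "real \<Rightarrow> real^2 \<Rightarrow> real^2 \<Rightarrow> real" where
  "slope c p q = (q$2 - p$2) / (al c q - al c p)"
definition lf :: "real \<Rightarrow> real^2 \<Rightarrow> real \<Rightarrow> real^2 \<Rightarrow> real" where
  "lf c p s z = z$2 - p$2 - s * (al c z - al c p)"

lemma lf_self: "lf c p s p = 0" by (simp add: lf_def)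

lemma lf_other: "al c p \<noteq> al c q \<Longrightarrow> lf c p (slope c p q) q = 0"
  by (simp add: lf_def slope_def)

lemma lf_swap: "al c p \<noteq> al c q \<Longrightarrow> lf c q (slope c q p) w = lf c p (slope c p q) w"
proof -
  assume h: "al c p \<noteq> al c q"
  have s: "slope c q p = slope c p q"
    unfolding slope_def by (metis minus_diff_eq minus_divide_divide)
  have "q$2 - p$2 = slope c p q * (al c q - al c p)" using h by (simp add: slope_def)
  then show ?thesis unfolding lf_def s by (simp add: algebra_simps)
qed

lemma coll_of_lf:
  assumes pq: "al c p \<noteq> al c q" and z: "lf c p (slope c p q) z = 0"
  shows "collinear {p, q, z}"
proof -
  define t where "t = (al c z - al c p) / (al c q - al c p)"
  have d: "al c q - al c p \<noteq> 0" using pq by simp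
  have e2: "z$2 - p$2 = t * (q$2 - p$2)"
    using z d unfolding lf_def slope_def t_def by (simp add: field_simps)
  have e1: "al c z - al c p = t * (al c q - al c p)" using d unfolding t_def by simp
  have "z$1 - p$1 = (al c z - al c p) - c*(z$2 - p$2)" by (simp add: al_def algebra_simps)
  also have "\<dots> = t*(al c q - al c p) - c*(t*(q$2-p$2))" using e1 e2 by simp
  also have "\<dots> = t*(q$1 - p$1)" by (simp add: al_def algebra_simps)
  finally have "z$1 - p$1 = t * (q$1 - p$1)" .
  then have "z = t *\<^sub>R q + (1 - t) *\<^sub>R p"
    using e2 by (simp add: vec_eq_iff forall_2 algebra_simps)
  then have "collinear {q, z, p}" by (auto simp: collinear_3_expand)
  then show ?thesis by (simp add: insert_commute)
qed



lemma hs_convex: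
  fixes w1 w2 k :: real
  shows "convex {z::real^2. w1 * z$1 + w2 * z$2 + k > 0}"
proof -
  have "{z::real^2. w1 * z$1 + w2 * z$2 + k > 0} = {z. inner (vector [w1,w2]) z > -k}"
    by (auto simp: inner_vec_def sum_2 vector_2 mult.commute)
  then show ?thesis using convex_halfspace_gt by simp
qed

lemma hull_disj:
  fixes X Y :: "(real^2) set" and w1 w2 k :: real
  assumes "\<forall>z\<in>X. w1 * z$1 + w2 * z$2 + k > 0" "\<forall>z\<in>Y. w1 * z$1 + w2 * z$2 + k < 0"
  shows "convex hull X \<inter> convex hull Y = {}"
proof -
  have c1: "convex hull X \<subseteq> {z. w1 * z$1 + w2 * z$2 + k > 0}"
    by (rule hull_minimal) (use assms hs_convex in auto)
  have "convex hull Y \<subseteq> {z. (-w1) * z$1 + (-w2) * z$2 + (-k) > 0}"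
    by (rule hull_minimal) (use assms hs_convex[of "-w1" "-w2" "-k"] in auto)
  with c1 show ?thesis by fastforce
qed


lemma sep_line:
  fixes S :: "(real^2) set"
  assumes fin: "finite S" and pS: "p \<in> S" and qS: "q \<in> S" and inj: "al c p \<noteq> al c q"
    and q0: "lf c p s q = 0"
    and nz: "\<forall>z\<in>S-{p,q}. lf c p s z \<noteq> 0"
    and col: "\<forall>z\<in>S-{p,q}. cc z = (lf c p s z > 0)"
  shows "convex hull {z\<in>S. cc z} \<inter> convex hull {z\<in>S. \<not> cc z} = {}"
proof -
  define tp :: real where "tp = (if cc p then 1 else -1)"
  define tq :: real where "tq = (if cc q then 1 else -1)"
  define b where "b = (tq - tp) / (al c q - al c p)"
  define a where "a = tp - b * al c p"
  define h where "h z = a + b * al c z" for z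
  have hp: "h p = tp" by (simp add: h_def a_def)
  have hq: "h q = tq"
  proof -
    have "b * (al c q - al c p) = tq - tp" using inj by (simp add: b_def)
    then have "b * al c q - b * al c p = tq - tp" by (simp add: algebra_simps)
    then show ?thesis unfolding h_def a_def by linarith
  qed
  define E where "E = (\<lambda>z. \<bar>lf c p s z\<bar> / (\<bar>h z\<bar> + 1)) ` (S - {p,q})"
  define eps where "eps = (if E = {} then 1 else Min E)"
  have finE: "finite E" using fin by (simp add: E_def)
  have Epos: "\<forall>e\<in>E. e > 0" using nz by (auto simp: E_def)
  have epos: "eps > 0"
  proof (cases "E = {}")
    case True then show ?thesis by (simp add: eps_def)
  next
    case False
    then have "Min E \<in> E" using finE by simp
    then show ?thesis using Epos False by (simp add: eps_def)
  qed
  have eps_le: "eps * \<bar>h z\<bar> < \<bar>lf c p s z\<bar>" if z: "z \<in> S - {p,q}" for z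
  proof -
    have "eps \<le> \<bar>lf c p s z\<bar> / (\<bar>h z\<bar> + 1)"
      using z finE by (auto simp: eps_def E_def intro!: Min_le)
    then have "eps * (\<bar>h z\<bar> + 1) \<le> \<bar>lf c p s z\<bar>"
      by (simp add: field_simps add_pos_nonneg)
    then show ?thesis using epos by (simp add: algebra_simps)
  qed
  define H where "H z = lf c p s z + eps * h z" for z
  have Hsign: "(H z > 0) = cc z \<and> (H z < 0) = (\<not> cc z)" if z: "z \<in> S" for z
  proof (cases "z \<in> {p,q}")
    case True
    then have "H z = eps * (if cc z then 1 else -1)"
      using q0 hp hq by (auto simp: H_def lf_self tp_def tq_def)
    then show ?thesis using epos by auto
  next
    case False
    then have zz: "z \<in> S - {p,q}" using z by simp
    have "\<bar>eps * h z\<bar> < \<bar>lf c p s z\<bar>" using eps_le[OF zz] epos by (simp add: abs_mult)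
    moreover have "(lf c p s z > 0) = cc z" using col zz by simp
    moreover have "lf c p s z \<noteq> 0" using nz zz by simp
    ultimately show ?thesis unfolding H_def by (cases "cc z") (auto simp: abs_if split: if_splits)
  qed
  define w1 where "w1 = eps * b - s"
  define w2 where "w2 = 1 - s * c + eps * b * c"
  define k where "k = - p$2 + s * al c p + eps * a"
  have Hform: "H z = w1 * z$1 + w2 * z$2 + k" for z
    unfolding H_def lf_def h_def w1_def w2_def k_def al_def by (simp add: algebra_simps)
  show ?thesis
    by (rule hull_disj[of _ w1 w2 k]) (use Hsign Hform in auto)
qed



lemma key_sign:
  fixes ax az al bx bz bl sy :: real
  assumes axz: "az \<noteq> ax" and axl: "al \<noteq> ax"
    and le: "\<bar>bl - bx - sy*(al-ax)\<bar> \<le> \<bar>bl - bx - ((bz-bx)/(az-ax))*(al-ax)\<bar>"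
    and nz: "bz - bx - sy*(az - ax) \<noteq> 0"
  shows "(bz - bx - sy*(az-ax) > 0) = (bz - bx - ((bl-bx)/(al-ax))*(az-ax) > 0)"
proof -
  define sz where "sz = (bz-bx)/(az-ax)"
  define sl where "sl = (bl-bx)/(al-ax)"
  have ez: "bz - bx = sz*(az-ax)" using axz by (simp add: sz_def)
  have el: "bl - bx = sl*(al-ax)" using axl by (simp add: sl_def)
  have e1: "bz - bx - sy*(az-ax) = (az-ax)*(sz-sy)" using ez by (simp add: algebra_simps)
  have e2: "bz - bx - sl*(az-ax) = (az-ax)*(sz-sl)" using ez by (simp add: algebra_simps)
  have e3: "bl - bx - sy*(al-ax) = (al-ax)*(sl-sy)" using el by (simp add: algebra_simps)
  have e4: "bl - bx - sz*(al-ax) = (al-ax)*(sl-sz)" using el by (simp add: algebra_simps)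
  have "\<bar>al-ax\<bar> * \<bar>sl-sy\<bar> \<le> \<bar>al-ax\<bar> * \<bar>sl-sz\<bar>"
    using le unfolding sz_def[symmetric] e3 e4 by (simp add: abs_mult)
  then have le2: "\<bar>sl-sy\<bar> \<le> \<bar>sl-sz\<bar>" using axl by simp
  have nz2: "sz \<noteq> sy" using nz e1 by auto
  have "(sz - sy) * (sz - sl) > 0"
  proof (rule ccontr)
    assume "\<not> (sz - sy) * (sz - sl) > 0"
    then have "(sz - sy) * (sz - sl) \<le> 0" by simp
    then have "(sz \<le> sy \<and> sz \<ge> sl) \<or> (sz \<ge> sy \<and> sz \<le> sl)"
      using mult_le_0_iff[of "sz-sy" "sz-sl"] by auto
    then show False using le2 nz2 by auto
  qed
  then show ?thesis unfolding sl_def[symmetric] e1 e2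
    using zero_less_mult_iff[of "az-ax" "sz-sy"] zero_less_mult_iff[of "az-ax" "sz-sl"]
      zero_less_mult_iff[of "sz-sy" "sz-sl"] by auto
qed




definition flipset :: "'a set \<Rightarrow> 'a \<Rightarrow> 'a set" where
  "flipset A w = (if w \<in> A then A - {w} else insert w A)"

lemma flipset_sub: "A \<subseteq> S \<Longrightarrow> w \<in> S \<Longrightarrow> flipset A w \<subseteq> S"
  by (auto simp: flipset_def)

lemma restrict_flip:
  "restrict_partition {A, S - A} (S - {w}) = restrict_partition {flipset A w, S - flipset A w} (S - {w})"
proof -
  have "A \<inter> (S - {w}) = flipset A w \<inter> (S - {w})" by (auto simp: flipset_def)
  moreover have "(S - A) \<inter> (S - {w}) = (S - flipset A w) \<inter> (S - {w})" by (auto simp: flipset_def)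
  ultimately show ?thesis by (simp add: restrict_partition_def)
qed

lemma card3_other:
  assumes "finite S" "card S \<ge> 3" shows "\<exists>z\<in>S. z \<noteq> a \<and> z \<noteq> b"
proof (rule ccontr)
  assume "\<not> ?thesis"
  then have "S \<subseteq> {a, b}" by auto
  then have "card S \<le> card {a,b}" by (simp add: card_mono)
  also have "\<dots> \<le> 2" by (simp add: card_insert_le_m1)
  finally show False using assms by simp
qed

lemma dist_zero: "partition_distance S P P = 0"
  unfolding partition_distance_def by (rule Least_eq_0) auto

lemma dist_one:
  assumes fin: "finite S" and AS: "A \<subseteq> S" and w: "w \<in> S" and ne: "A \<noteq> {}" "S - A \<noteq> {}"
    and c3: "card S \<ge> 3"
  shows "partition_distance S {A, S - A} {flipset A w, S - flipset A w} = 1"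
  unfolding partition_distance_def
proof (rule Least_equality)
  show "\<exists>R\<subseteq>S. card R = 1 \<and> restrict_partition {A, S - A} (S - R) =
        restrict_partition {flipset A w, S - flipset A w} (S - R)"
  proof (intro exI[of _ "{w}"] conjI)
    show "{w} \<subseteq> S" using w by simp
    show "card {w} = 1" by simp
    show "restrict_partition {A, S - A} (S - {w}) = restrict_partition {flipset A w, S - flipset A w} (S - {w})"
      by (rule restrict_flip)
  qed
next
  fix k assume "\<exists>R\<subseteq>S. card R = k \<and> restrict_partition {A, S - A} (S - R) =
        restrict_partition {flipset A w, S - flipset A w} (S - R)"
  then obtain R where R: "R \<subseteq> S" "card R = k"
    "restrict_partition {A, S - A} (S - R) = restrict_partition {flipset A w, S - flipset A w} (S - R)"
    by blast
  show "1 \<le> k"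
  proof (rule ccontr)
    assume "\<not> 1 \<le> k"
    then have "k = 0" by simp
    moreover have "finite R" using R(1) fin by (rule finite_subset)
    ultimately have R0: "R = {}" using R(2) by simp
    have l: "restrict_partition {A, S - A} S = {A, S - A}"
      using AS ne unfolding restrict_partition_def by auto
    have r: "restrict_partition {flipset A w, S - flipset A w} S =
             {flipset A w \<inter> S, (S - flipset A w) \<inter> S} - {{}}"
      unfolding restrict_partition_def by simp
    have eq: "{A, S - A} = {flipset A w \<inter> S, (S - flipset A w) \<inter> S} - {{}}"
      using R(3) unfolding R0 Diff_empty l r .
    have "A \<in> {flipset A w \<inter> S, (S - flipset A w) \<inter> S}" using eq by blast
    moreover have "A \<noteq> flipset A w \<inter> S" using w by (auto simp: flipset_def)
    ultimately have A2: "A = (S - flipset A w) \<inter> S" by blast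
    obtain z where z: "z \<in> S" "z \<noteq> w" using card3_other[OF fin c3, of w w] by auto
    have "z \<in> flipset A w \<longleftrightarrow> z \<in> A" using z by (auto simp: flipset_def)
    moreover have "z \<in> A \<longleftrightarrow> z \<notin> flipset A w" using A2 z by blast
    ultimately show False by blast
  qed
qed

lemma restrict_eq_cases:
  assumes CS: "C \<subseteq> S" and AS: "A \<subseteq> S" and T: "T \<noteq> {}"
    and eq: "{A \<inter> T, (S - A) \<inter> T} - {{}} = {C \<inter> T, (S - C) \<inter> T} - {{}}"
    and TS: "T \<subseteq> S"
  shows "C \<inter> T = A \<inter> T \<or> C \<inter> T = (S - A) \<inter> T"
proof (cases "C \<inter> T = {}")
  case False
  then have "C \<inter> T \<in> {C \<inter> T, (S - C) \<inter> T} - {{}}" by simp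
  then have "C \<inter> T \<in> {A \<inter> T, (S - A) \<inter> T} - {{}}" using eq by simp
  then show ?thesis by simp
next
  case True
  have "(S - C) \<inter> T = T" using TS True by auto
  then have "T \<in> {C \<inter> T, (S - C) \<inter> T} - {{}}" using T by simp
  then have "T \<in> {A \<inter> T, (S - A) \<inter> T} - {{}}" using eq by simp
  then have "T = A \<inter> T \<or> T = (S - A) \<inter> T" by simp
  then show ?thesis
  proof
    assume "T = A \<inter> T"
    then have "(S - A) \<inter> T = {}" by auto
    then show ?thesis using True by simp
  next
    assume "T = (S - A) \<inter> T"
    then have "A \<inter> T = {}" by auto
    then show ?thesis using True by simp
  qed
qed

lemma agree1: "C \<subseteq> S \<Longrightarrow> A \<subseteq> S \<Longrightarrow> C \<inter> (S - {w}) = A \<inter> (S - {w}) \<Longrightarrow> (w \<in> C) = (w \<in> A) \<Longrightarrow> C = A"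
  by (auto simp: set_eq_iff)

lemma agree2: "C \<subseteq> S \<Longrightarrow> A \<subseteq> S \<Longrightarrow> w \<in> S \<Longrightarrow> C \<inter> (S - {w}) = A \<inter> (S - {w}) \<Longrightarrow> (w \<in> C) \<noteq> (w \<in> A) \<Longrightarrow> C = flipset A w"
  unfolding flipset_def by (auto simp: set_eq_iff)

lemma dist_one_conv:
  assumes fin: "finite S" and AS: "A \<subseteq> S" and ne: "A \<noteq> {}" "S - A \<noteq> {}"
    and c3: "card S \<ge> 3" and P': "P' \<in> two_partitions S"
    and d: "partition_distance S {A, S - A} P' = 1"
  shows "\<exists>w\<in>S. P' = {flipset A w, S - flipset A w}"
proof -
  obtain C where C: "P' = {C, S - C}" "C \<subseteq> S" "C \<noteq> {}" "S - C \<noteq> {}"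
    using P' unfolding two_partitions_def by blast
  let ?Q = "\<lambda>k. \<exists>R\<subseteq>S. card R = k \<and> restrict_partition {A, S - A} (S - R) = restrict_partition P' (S - R)"
  have "?Q (card S)"
  proof (intro exI[of _ S] conjI)
    show "restrict_partition {A, S - A} (S - S) = restrict_partition P' (S - S)"
      unfolding restrict_partition_def by auto
  qed auto
  then have "?Q (LEAST k. ?Q k)" by (rule LeastI)
  then have "?Q 1" using d by (simp add: partition_distance_def)
  then obtain R where R: "R \<subseteq> S" "card R = 1"
    "restrict_partition {A, S - A} (S - R) = restrict_partition P' (S - R)" by blast
  obtain w where w: "R = {w}" using R(2) card_1_singletonE by blast
  have wS: "w \<in> S" using R w by auto
  define T where "T = S - {w}"
  obtain z0 where z0: "z0 \<in> S" "z0 \<noteq> w" using card3_other[OF fin c3, of w w] by auto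
  have Tne: "T \<noteq> {}" using z0 unfolding T_def by blast
  have eq: "{A \<inter> T, (S - A) \<inter> T} - {{}} = {C \<inter> T, (S - C) \<inter> T} - {{}}"
    using R(3) unfolding w C(1) T_def[symmetric] by (simp add: restrict_partition_def)
  have TS: "T \<subseteq> S" unfolding T_def by blast
  have cases: "C \<inter> T = A \<inter> T \<or> C \<inter> T = (S - A) \<inter> T"
    by (rule restrict_eq_cases[OF C(2) AS Tne eq TS])
  have notP: "P' \<noteq> {A, S - A}" using d dist_zero[of S "{A, S - A}"] by auto
  have SAS: "S - A \<subseteq> S" by blast
  have dd: "S - (S - A) = A" using AS by blast
  have fS: "flipset A w \<subseteq> S" by (rule flipset_sub[OF AS wS])
  have dd2: "S - (S - flipset A w) = flipset A w" using fS by blast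
  have fl2: "flipset (S - A) w = S - flipset A w" unfolding flipset_def using wS by auto
  show ?thesis
  proof (intro bexI[OF _ wS])
    from cases show "P' = {flipset A w, S - flipset A w}"
    proof
      assume h: "C \<inter> T = A \<inter> T"
      show ?thesis
      proof (cases "(w \<in> C) = (w \<in> A)")
        case True
        then have "C = A" using agree1[OF C(2) AS] h unfolding T_def by blast
        then show ?thesis using notP C(1) by simp
      next
        case False
        then have "C = flipset A w" using agree2[OF C(2) AS wS] h unfolding T_def by blast
        then show ?thesis using C(1) by simp
      qed
    next
      assume h: "C \<inter> T = (S - A) \<inter> T"
      show ?thesis
      proof (cases "(w \<in> C) = (w \<in> S - A)")
        case True
        then have "C = S - A" using agree1[OF C(2) SAS] h unfolding T_def by blast
        then have "P' = {S - A, A}" using C(1) dd by simp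
        then show ?thesis using notP by (simp add: insert_commute)
      next
        case False
        then have "C = flipset (S - A) w" using agree2[OF C(2) SAS wS] h unfolding T_def by blast
        then have "C = S - flipset A w" using fl2 by simp
        then have "P' = {S - flipset A w, flipset A w}" using C(1) dd2 by simp
        then show ?thesis by (simp add: insert_commute)
      qed
    qed
  qed
qed

lemma flip_inj:
  assumes fin: "finite S" and c3: "card S \<ge> 3" and AS: "A \<subseteq> S" and w: "w \<in> S" "w' \<in> S"
    and eq: "{flipset A w, S - flipset A w} = {flipset A w', S - flipset A w'}"
  shows "w = w'"
proof (rule ccontr)
  assume ne: "w \<noteq> w'"
  have "flipset A w \<noteq> flipset A w'" using ne by (auto simp: flipset_def)
  then have h: "flipset A w = S - flipset A w'" using eq by (metis doubleton_eq_iff)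
  obtain z where z: "z \<in> S" "z \<noteq> w" "z \<noteq> w'" using card3_other[OF fin c3] by blast
  have "z \<in> flipset A w \<longleftrightarrow> z \<in> A" "z \<in> flipset A w' \<longleftrightarrow> z \<in> A"
    using z by (auto simp: flipset_def)
  moreover have "z \<in> flipset A w \<longleftrightarrow> z \<notin> flipset A w'" using h z by (simp add: set_eq_iff)
  ultimately show False by blast
qed



lemma exists_inj_coord:
  fixes S :: "(real^2) set"
  assumes "finite S"
  shows "\<exists>c. \<forall>p\<in>S. \<forall>q\<in>S. p \<noteq> q \<longrightarrow> al c p \<noteq> al c q"
proof -
  define B where "B = (\<lambda>(p,q). (q$1 - p$1) / (p$2 - q$2)) ` (S \<times> S)"
  have "finite B" using assms by (simp add: B_def)
  then obtain c where c: "c \<notin> B" using ex_new_if_finite[OF infinite_UNIV_char_0] by blast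
  have "al c p \<noteq> al c q" if p: "p \<in> S" and q: "q \<in> S" and ne: "p \<noteq> q" for p q
  proof
    assume eq: "al c p = al c q"
    show False
    proof (cases "p$2 = q$2")
      case True
      then have "p$1 = q$1" using eq by (simp add: al_def)
      then have "p = q" using True by (simp add: vec_eq_iff forall_2)
      then show False using ne by simp
    next
      case False
      then have "c = (q$1 - p$1) / (p$2 - q$2)" using eq by (simp add: al_def field_simps)
      then have "c \<in> B" using p q unfolding B_def by force
      then show False using c by simp
    qed
  qed
  then show ?thesis by blast
qed

lemma min_pair:
  fixes f :: "'a \<Rightarrow> real"
  assumes "finite A" "A \<noteq> {}"
  shows "\<exists>a\<in>A. \<forall>b\<in>A. f a \<le> f b"
  using arg_min_if_finite[OF assms, of f] by (metis not_le)


lemma gp_nz: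
  fixes S :: "(real^2) set"
  assumes gp: "general_position_2d S" and inj: "\<forall>p\<in>S. \<forall>q\<in>S. p \<noteq> q \<longrightarrow> al c p \<noteq> al c q"
    and p: "p \<in> S" and q: "q \<in> S" and z: "z \<in> S" and d: "p \<noteq> q" "p \<noteq> z" "q \<noteq> z"
  shows "lf c p (slope c p q) z \<noteq> 0"
proof
  assume h: "lf c p (slope c p q) z = 0"
  have "collinear {p, q, z}" by (rule coll_of_lf[OF _ h]) (use inj p q d in auto)
  moreover have "card {p,q,z} = 3" using d by simp
  moreover have "{p,q,z} \<subseteq> S" using p q z by simp
  ultimately show False using gp unfolding general_position_2d_def by blast
qed

theorem proposition4p2:
  fixes S :: "(real^2) set" and n :: nat
  assumes "finite S" and "card S = n" and "n > 4"
    and "general_position_2d S"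
  shows "\<exists>P \<in> radon_partitions S. radon_graph_degree S P = n - 3"
proof -
  note fin = assms(1) and cardS = assms(2) and n4 = assms(3) and gp = assms(4)
  obtain c where inj: "\<forall>p\<in>S. \<forall>q\<in>S. p \<noteq> q \<longrightarrow> al c p \<noteq> al c q"
    using exists_inj_coord[OF fin] by blast
  have NZ: "lf c p (slope c p q) z \<noteq> 0"
    if "p \<in> S" "q \<in> S" "z \<in> S" "p \<noteq> q" "p \<noteq> z" "q \<noteq> z" for p q z
    by (rule gp_nz[OF gp inj that])
  have Sne: "S \<noteq> {}" using cardS n4 by auto
  then obtain l where lS: "l \<in> S" by blast
  define PP where "PP = {(x,y). x \<in> S - {l} \<and> y \<in> S - {l} \<and> x \<noteq> y}"
  define vd where "vd = (\<lambda>(x,y). \<bar>lf c x (slope c x y) l\<bar>)"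
  have finPP: "finite PP"
  proof -
    have "PP \<subseteq> S \<times> S" unfolding PP_def by auto
    then show ?thesis using fin finite_subset by blast
  qed
  have c3: "card S \<ge> 3" using cardS n4 by simp
  obtain x0 where x0: "x0 \<in> S" "x0 \<noteq> l" using card3_other[OF fin c3, of l l] by blast
  obtain y0 where y0: "y0 \<in> S" "y0 \<noteq> l" "y0 \<noteq> x0" using card3_other[OF fin c3, of l x0] by blast
  have "x0 \<in> S - {l}" "y0 \<in> S - {l}" "x0 \<noteq> y0" using x0 y0 by auto
  then have PPne: "PP \<noteq> {}" unfolding PP_def by blast
  obtain xy where xy: "xy \<in> PP" and xymin: "\<forall>b\<in>PP. vd xy \<le> vd b"
    using min_pair[OF finPP PPne, of vd] by blast
  obtain x y where xyd: "xy = (x,y)" by (cases xy)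
  have xS: "x \<in> S" and yS: "y \<in> S" and xl: "x \<noteq> l" and yl: "y \<noteq> l" and xny: "x \<noteq> y"
    using xy unfolding xyd PP_def by auto
  have mn: "\<bar>lf c x (slope c x y) l\<bar> \<le> \<bar>lf c u (slope c u v) l\<bar>"
    if "u \<in> S" "v \<in> S" "u \<noteq> l" "v \<noteq> l" "u \<noteq> v" for u v
  proof -
    have "(u,v) \<in> PP" using that unfolding PP_def by auto
    then show ?thesis using xymin unfolding xyd vd_def by fastforce
  qed
  define R where "R = S - {l, x, y}"
  define G1 where "G1 = lf c x (slope c x y)"
  define G2 where "G2 = lf c x (slope c x l)"
  define G3 where "G3 = lf c y (slope c y l)"
  have inj_xy: "al c x \<noteq> al c y" using inj xS yS xny by blast
  have inj_xl: "al c x \<noteq> al c l" using inj xS lS xl by blast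
  have inj_yl: "al c y \<noteq> al c l" using inj yS lS yl by blast
  have Rsub: "R \<subseteq> S" unfolding R_def by blast
  have inR: "z \<in> S \<and> z \<noteq> l \<and> z \<noteq> x \<and> z \<noteq> y" if "z \<in> R" for z
    using that unfolding R_def by blast
  have keyx: "(G1 z > 0) = (G2 z > 0)" if zR: "z \<in> R" for z
  proof -
    have z: "z \<in> S" "z \<noteq> l" "z \<noteq> x" "z \<noteq> y" using inR[OF zR] by auto
    have azx: "al c z \<noteq> al c x" using inj z xS by blast
    have le: "\<bar>lf c x (slope c x y) l\<bar> \<le> \<bar>lf c x (slope c x z) l\<bar>"
      using mn[of x z] xS z xl by auto
    have nz: "G1 z \<noteq> 0" unfolding G1_def by (rule NZ) (use xS yS z xny in auto)
    show ?thesis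
      using key_sign[of "al c z" "al c x" "al c l" "l$2" "x$2" "slope c x y" "z$2", OF azx inj_xl[symmetric]]
        le nz unfolding G1_def G2_def lf_def slope_def by simp
  qed
  have keyy: "(G1 z > 0) = (G3 z > 0)" if zR: "z \<in> R" for z
  proof -
    have z: "z \<in> S" "z \<noteq> l" "z \<noteq> x" "z \<noteq> y" using inR[OF zR] by auto
    have azy: "al c z \<noteq> al c y" using inj z yS by blast
    have sw: "lf c y (slope c y x) w = G1 w" for w unfolding G1_def by (rule lf_swap[OF inj_xy])
    have le: "\<bar>lf c y (slope c y x) l\<bar> \<le> \<bar>lf c y (slope c y z) l\<bar>"
      using mn[of y z] yS z yl sw[of l] unfolding G1_def by auto
    have nz: "lf c y (slope c y x) z \<noteq> 0" using sw[of z] NZ[of x y z] xS yS z xny unfolding G1_def by auto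
    have "(lf c y (slope c y x) z > 0) = (G3 z > 0)"
      using key_sign[of "al c z" "al c y" "al c l" "l$2" "y$2" "slope c y x" "z$2", OF azy inj_yl[symmetric]]
        le nz unfolding G3_def lf_def slope_def by simp
    then show ?thesis using sw[of z] by simp
  qed
  define kl where "kl = (G1 l > 0)"
  define kx where "kx = (G3 x > 0)"
  define ky where "ky = (G2 y > 0)"
  define colP where "colP z = (if z = l then \<not> kl else if z = x then \<not> kx else if z = y then \<not> ky else G1 z > 0)" for z
  have colR: "colP z = (G1 z > 0)" if "z \<in> R" for z using inR[OF that] by (simp add: colP_def)
  have G1x: "G1 x = 0" unfolding G1_def by (rule lf_self)
  have G1y: "G1 y = 0" unfolding G1_def by (rule lf_other[OF inj_xy])
  have G2x: "G2 x = 0" unfolding G2_def by (rule lf_self)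
  have G2l: "G2 l = 0" unfolding G2_def by (rule lf_other[OF inj_xl])
  have G3y: "G3 y = 0" unfolding G3_def by (rule lf_self)
  have G3l: "G3 l = 0" unfolding G3_def by (rule lf_other[OF inj_yl])
  have Sdecomp: "z \<in> S \<Longrightarrow> z = l \<or> z = x \<or> z = y \<or> z \<in> R" for z unfolding R_def by blast
  have sepP: "convex hull {z\<in>S. cc z} \<inter> convex hull {z\<in>S. \<not> cc z} = {}"
    if ccR: "\<forall>z\<in>R. cc z = (G1 z > 0)" and ccv: "cc l = kl \<or> cc x = kx \<or> cc y = ky" for cc
  proof -
    consider "cc l = kl" | "cc x = kx" | "cc y = ky" using ccv by blast
    then show ?thesis
    proof cases
      case 1
      show ?thesis
      proof (rule sep_line[OF fin xS yS inj_xy])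
        show "lf c x (slope c x y) y = 0" by (rule lf_other[OF inj_xy])
        show "\<forall>z\<in>S - {x, y}. lf c x (slope c x y) z \<noteq> 0"
        proof
          fix z assume z: "z \<in> S - {x,y}"
          show "lf c x (slope c x y) z \<noteq> 0" by (rule NZ) (use z xS yS xny in auto)
        qed
        show "\<forall>z\<in>S - {x, y}. cc z = (0 < lf c x (slope c x y) z)"
        proof
          fix z assume z: "z \<in> S - {x,y}"
          then have "z = l \<or> z \<in> R" using Sdecomp by blast
          then show "cc z = (0 < lf c x (slope c x y) z)"
            using 1 ccR unfolding kl_def G1_def by auto
        qed
      qed
    next
      case 2
      show ?thesis
      proof (rule sep_line[OF fin yS lS inj_yl])
        show "lf c y (slope c y l) l = 0" by (rule lf_other[OF inj_yl])
        show "\<forall>z\<in>S - {y, l}. lf c y (slope c y l) z \<noteq> 0"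
        proof
          fix z assume z: "z \<in> S - {y,l}"
          show "lf c y (slope c y l) z \<noteq> 0" by (rule NZ) (use z yS lS yl in auto)
        qed
        show "\<forall>z\<in>S - {y, l}. cc z = (0 < lf c y (slope c y l) z)"
        proof
          fix z assume z: "z \<in> S - {y,l}"
          then have "z = x \<or> z \<in> R" using Sdecomp by blast
          then show "cc z = (0 < lf c y (slope c y l) z)"
            using 2 ccR keyy unfolding kx_def G3_def by auto
        qed
      qed
    next
      case 3
      show ?thesis
      proof (rule sep_line[OF fin xS lS inj_xl])
        show "lf c x (slope c x l) l = 0" by (rule lf_other[OF inj_xl])
        show "\<forall>z\<in>S - {x, l}. lf c x (slope c x l) z \<noteq> 0"
        proof
          fix z assume z: "z \<in> S - {x,l}"
          show "lf c x (slope c x l) z \<noteq> 0" by (rule NZ) (use z xS lS xl in auto)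
        qed
        show "\<forall>z\<in>S - {x, l}. cc z = (0 < lf c x (slope c x l) z)"
        proof
          fix z assume z: "z \<in> S - {x,l}"
          then have "z = y \<or> z \<in> R" using Sdecomp by blast
          then show "cc z = (0 < lf c x (slope c x l) z)"
            using 3 ccR keyx unfolding ky_def G2_def by auto
        qed
      qed
    qed
  qed
  have radon4: "convex hull {z\<in>S. cc z} \<inter> convex hull {z\<in>S. \<not> cc z} \<noteq> {}"
    if eR: "e \<in> R" and ccT: "\<forall>z\<in>{l,x,y,e}. cc z = colP z" for cc e
  proof -
    define T where "T = {l,x,y,e}"
    have e: "e \<in> S" "e \<noteq> l" "e \<noteq> x" "e \<noteq> y" using inR[OF eR] by auto
    have TS: "T \<subseteq> S" using lS xS yS e unfolding T_def by auto
    have finT: "finite T" unfolding T_def by simp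
    have cT: "card T = 4" unfolding T_def using e xl yl xny by simp
    have "affine_dependent T"
      by (rule affine_dependent_biggerset[OF finT]) (simp add: cT)
    then obtain M N where MN: "M \<inter> N = {}" "M \<union> N = T" "convex hull M \<inter> convex hull N \<noteq> {}"
      using Radon_partition[OF finT] by blast
    have claim: "convex hull {z\<in>S. cc z} \<inter> convex hull {z\<in>S. \<not> cc z} \<noteq> {}"
      if h: "M' \<inter> N' = {}" "M' \<union> N' = T" "convex hull M' \<inter> convex hull N' \<noteq> {}"
        and he: "(e \<in> M') = cc e" for M' N'
    proof -
      have agree: "\<forall>v\<in>{l,x,y}. (v \<in> M') = cc v"
      proof (rule ccontr)
        assume "\<not> (\<forall>v\<in>{l,x,y}. (v \<in> M') = cc v)"
        then obtain v where v: "v \<in> {l,x,y}" "(v \<in> M') \<noteq> cc v" by blast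
        define d where "d z = (if z \<in> {l,x,y} then z \<in> M' else colP z)" for z
        have dR: "\<forall>z\<in>R. d z = (G1 z > 0)" using inR colR unfolding d_def by auto
        have ccv: "cc v = colP v" using ccT v(1) by auto
        have dv: "d l = kl \<or> d x = kx \<or> d y = ky"
          using v ccv unfolding d_def colP_def by (auto split: if_splits)
        have disj: "convex hull {z\<in>S. d z} \<inter> convex hull {z\<in>S. \<not> d z} = {}"
          by (rule sepP[OF dR dv])
        have de: "d e = cc e" using e ccT unfolding d_def by auto
        have M'sub: "M' \<subseteq> {z\<in>S. d z}"
        proof
          fix z assume z: "z \<in> M'"
          then have zT: "z \<in> T" using h(2) by blast
          then have "z \<in> S" using TS by blast
          moreover have "d z"
          proof (cases "z \<in> {l,x,y}")
            case True then show ?thesis using z by (simp add: d_def)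
          next
            case False then have "z = e" using zT unfolding T_def by blast
            then show ?thesis using de he z by simp
          qed
          ultimately show "z \<in> {z\<in>S. d z}" by simp
        qed
        have N'sub: "N' \<subseteq> {z\<in>S. \<not> d z}"
        proof
          fix z assume z: "z \<in> N'"
          then have zT: "z \<in> T" using h(2) by blast
          then have "z \<in> S" using TS by blast
          have zM: "z \<notin> M'" using z h(1) by blast
          moreover have "\<not> d z"
          proof (cases "z \<in> {l,x,y}")
            case True then show ?thesis using zM by (simp add: d_def)
          next
            case False then have "z = e" using zT unfolding T_def by blast
            then show ?thesis using de he zM by simp
          qed
          ultimately show "z \<in> {z\<in>S. \<not> d z}" using \<open>z \<in> S\<close> by simp
        qed
        have "convex hull M' \<inter> convex hull N' \<subseteq> convex hull {z\<in>S. d z} \<inter> convex hull {z\<in>S. \<not> d z}"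
          using hull_mono[OF M'sub] hull_mono[OF N'sub] by blast
        then show False using disj h(3) by blast
      qed
      have M'sub: "M' \<subseteq> {z\<in>S. cc z}"
      proof
        fix z assume z: "z \<in> M'"
        then have zT: "z \<in> T" using h(2) by blast
        then have "z \<in> S" using TS by blast
        moreover have "cc z"
        proof (cases "z \<in> {l,x,y}")
          case True then show ?thesis using z agree by blast
        next
          case False then have "z = e" using zT unfolding T_def by blast
          then show ?thesis using he z by simp
        qed
        ultimately show "z \<in> {z\<in>S. cc z}" by simp
      qed
      have N'sub: "N' \<subseteq> {z\<in>S. \<not> cc z}"
      proof
        fix z assume z: "z \<in> N'"
        then have zT: "z \<in> T" using h(2) by blast
        then have "z \<in> S" using TS by blast
        have zM: "z \<notin> M'" using z h(1) by blast
        moreover have "\<not> cc z"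
        proof (cases "z \<in> {l,x,y}")
          case True then show ?thesis using zM agree by blast
        next
          case False then have "z = e" using zT unfolding T_def by blast
          then show ?thesis using he zM by simp
        qed
        ultimately show "z \<in> {z\<in>S. \<not> cc z}" using \<open>z \<in> S\<close> by simp
      qed
      have "convex hull M' \<inter> convex hull N' \<subseteq> convex hull {z\<in>S. cc z} \<inter> convex hull {z\<in>S. \<not> cc z}"
        using hull_mono[OF M'sub] hull_mono[OF N'sub] by blast
      then show ?thesis using h(3) by blast
    qed
    show ?thesis
    proof (cases "(e \<in> M) = cc e")
      case True
      then show ?thesis using claim[OF MN] by blast
    next
      case False
      have eT: "e \<in> T" unfolding T_def by simp
      then have "(e \<in> N) = cc e" using False MN(1,2) by blast
      moreover have "N \<inter> M = {}" "N \<union> M = T" "convex hull N \<inter> convex hull M \<noteq> {}"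
        using MN by blast+
      ultimately show ?thesis using claim by blast
    qed
  qed
  define A where "A = {z\<in>S. colP z}"
  have AS: "A \<subseteq> S" unfolding A_def by blast
  have SA: "S - A = {z\<in>S. \<not> colP z}" unfolding A_def by blast
  have cardR: "card R = n - 3"
  proof -
    have "card R = card S - card {l,x,y}" unfolding R_def
      by (rule card_Diff_subset) (use lS xS yS in auto)
    moreover have "card {l,x,y} = 3" using xl yl xny by auto
    ultimately show ?thesis using cardS by simp
  qed
  have c3: "card S \<ge> 3" using cardS n4 by simp
  have finR: "finite R" using fin Rsub finite_subset by blast
  have Rother: "\<exists>e\<in>R. e \<noteq> w" for w
  proof -
    have "card R \<ge> 2" using cardR n4 by simp
    moreover have "R \<subseteq> {w} \<Longrightarrow> card R \<le> 1"
      using card_mono[of "{w}" R] by simp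
    ultimately have "\<not> R \<subseteq> {w}" by linarith
    then show ?thesis by blast
  qed
  define fc where "fc w z = (if z = w then \<not> colP z else colP z)" for w z
  have flipeq: "flipset A w = {z\<in>S. fc w z}" if "w \<in> S" for w
    using that unfolding flipset_def A_def fc_def by auto
  have flipc: "S - flipset A w = {z\<in>S. \<not> fc w z}" if "w \<in> S" for w
    using that unfolding flipset_def A_def fc_def by auto
  obtain e0 where e0: "e0 \<in> R" using Rother by blast
  have PR: "convex hull A \<inter> convex hull (S - A) \<noteq> {}"
    unfolding SA unfolding A_def by (rule radon4[OF e0]) simp
  have Ane: "A \<noteq> {}" "S - A \<noteq> {}"
  proof
    assume h: "A = {}" show False using PR unfolding h by simp
  next
    show "S - A \<noteq> {}"
    proof
      assume h: "S - A = {}" show False using PR unfolding h by simp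
    qed
  qed
  have Prad: "{A, S - A} \<in> radon_partitions S"
    unfolding radon_partitions_def two_partitions_def using AS Ane PR by blast
  have flipR: "convex hull (flipset A w) \<inter> convex hull (S - flipset A w) \<noteq> {}" if wR: "w \<in> R" for w
  proof -
    have w: "w \<in> S" "w \<noteq> l" "w \<noteq> x" "w \<noteq> y" using inR[OF wR] by auto
    obtain e where e: "e \<in> R" "e \<noteq> w" using Rother by blast
    have "convex hull {z\<in>S. fc w z} \<inter> convex hull {z\<in>S. \<not> fc w z} \<noteq> {}"
      by (rule radon4[OF e(1)]) (use w e in \<open>auto simp: fc_def\<close>)
    then show ?thesis using flipeq[OF w(1)] flipc[OF w(1)] by simp
  qed
  have flipV: "convex hull (flipset A v) \<inter> convex hull (S - flipset A v) = {}" if v: "v \<in> {l,x,y}" for v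
  proof -
    have vS: "v \<in> S" using v lS xS yS by auto
    have "convex hull {z\<in>S. fc v z} \<inter> convex hull {z\<in>S. \<not> fc v z} = {}"
    proof (rule sepP)
      show "\<forall>z\<in>R. fc v z = (0 < G1 z)" using v inR colR unfolding fc_def by auto
      show "fc v l = kl \<or> fc v x = kx \<or> fc v y = ky"
        using v xl yl xny unfolding fc_def colP_def by auto
    qed
    then show ?thesis using flipeq[OF vS] flipc[OF vS] by simp
  qed
  have setEq: "{P' \<in> radon_partitions S. partition_distance S {A, S - A} P' = 1} =
               (\<lambda>w. {flipset A w, S - flipset A w}) ` R"
  proof
    show "{P' \<in> radon_partitions S. partition_distance S {A, S - A} P' = 1}
          \<subseteq> (\<lambda>w. {flipset A w, S - flipset A w}) ` R"
    proof
      fix P' assume P': "P' \<in> {P' \<in> radon_partitions S. partition_distance S {A, S - A} P' = 1}"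
      then have P'r: "P' \<in> radon_partitions S" and d: "partition_distance S {A, S - A} P' = 1" by auto
      have P't: "P' \<in> two_partitions S" using P'r unfolding radon_partitions_def by blast
      obtain w where wS: "w \<in> S" and P'eq: "P' = {flipset A w, S - flipset A w}"
        using dist_one_conv[OF fin AS Ane c3 P't d] by blast
      have "w \<in> R"
      proof (rule ccontr)
        assume "w \<notin> R"
        then have wv: "w \<in> {l,x,y}" using wS unfolding R_def by blast
        obtain A' B' where AB: "P' = {A', B'}" "convex hull A' \<inter> convex hull B' \<noteq> {}"
          using P'r unfolding radon_partitions_def by blast
        have "(A' = flipset A w \<and> B' = S - flipset A w) \<or> (A' = S - flipset A w \<and> B' = flipset A w)"
          using AB(1) P'eq by (metis doubleton_eq_iff)
        then have "convex hull (flipset A w) \<inter> convex hull (S - flipset A w) \<noteq> {}"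
          using AB(2) by (auto simp: Int_commute)
        then show False using flipV[OF wv] by simp
      qed
      then show "P' \<in> (\<lambda>w. {flipset A w, S - flipset A w}) ` R" using P'eq by blast
    qed
  next
    show "(\<lambda>w. {flipset A w, S - flipset A w}) ` R
          \<subseteq> {P' \<in> radon_partitions S. partition_distance S {A, S - A} P' = 1}"
    proof
      fix P' assume "P' \<in> (\<lambda>w. {flipset A w, S - flipset A w}) ` R"
      then obtain w where wR: "w \<in> R" and P'eq: "P' = {flipset A w, S - flipset A w}" by blast
      have wS: "w \<in> S" using wR Rsub by blast
      have hh: "convex hull (flipset A w) \<inter> convex hull (S - flipset A w) \<noteq> {}" by (rule flipR[OF wR])
      have ne: "flipset A w \<noteq> {}" "S - flipset A w \<noteq> {}"
      proof
        assume h: "flipset A w = {}" show False using hh unfolding h by simp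
      next
        show "S - flipset A w \<noteq> {}"
        proof
          assume h: "S - flipset A w = {}" show False using hh unfolding h by simp
        qed
      qed
      have "P' \<in> radon_partitions S"
        unfolding radon_partitions_def two_partitions_def P'eq
        using flipset_sub[OF AS wS] ne hh by blast
      moreover have "partition_distance S {A, S - A} P' = 1"
        unfolding P'eq by (rule dist_one[OF fin AS wS Ane c3])
      ultimately show "P' \<in> {P' \<in> radon_partitions S. partition_distance S {A, S - A} P' = 1}" by simp
    qed
  qed
  have injR: "inj_on (\<lambda>w. {flipset A w, S - flipset A w}) R"
  proof (rule inj_onI)
    fix w w' assume "w \<in> R" "w' \<in> R" "{flipset A w, S - flipset A w} = {flipset A w', S - flipset A w'}"
    then show "w = w'" using flip_inj[OF fin c3 AS] Rsub by blast
  qed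
  have "radon_graph_degree S {A, S - A} = n - 3"
    unfolding radon_graph_degree_def setEq card_image[OF injR] cardR ..
  then show ?thesis using Prad by blast
qed


end
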